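(* Let $\mathcal A=\{0,1,2\}$ and $$X_{\mathcal F}=\Big\{x\in\{0,1,2\}^{\mathbb N}:\ \text{for all } i,n\in\mathbb N,\ x_ix_{i+1}\notin\{12,21\}\ \text{and}\ \#\{0\le j<n: x_{i+j}x_{i+j+1}\in\{00,11,22\}\}\le 100+\ln n\Big\},$$ with the left shift $\sigma$. Let $\mathcal G=\bigcup_{n\in\mathbb N}\{0a_10a_2\cdots0a_n: a_i\in\{1,2\}\}$. Then $\mathcal G\subset\mathcal L(X_{\mathcal F})$, $\mathcal G$ has $(W)$-specification, $\mathcal L(X_{\mathcal F})$ is edit approachable by $\mathcal G$, and $(X_{\mathcal F},\sigma)$ does not have the approximate product property.
   Context: $\{0,1,2\}^{\mathbb N}$ carries the metric $d(x,y)=\sum_{j\ge1}|x_j-y_j|2^{-j}$; $\mathcal L(X)$ is the set of finite words occurring in points of $X$. $\mathcal G\subset\mathcal L$ has $(W)$-specification if there is $\tau\in\mathbb N$ such that for all $u,v\in\mathcal G$ there is $w\in\mathcal L$ with $|w|\le\tau$ and $uwv\in\mathcal G$. The edit distance $\hat d(v,w)$ is the minimal number of single-symbol substitutions, insertions or deletions transforming $v$ into $w$; $\mathcal L$ is edit approachable by $\mathcal G$ if there is a nondecreasing $g:\mathbb N\to\mathbb N$ with $g(n)/n\to0$ such that every $w\in\mathcal L$ has $v\in\mathcal G$ with $\hat d(w,v)\le g(|w|)$. A dynamical system $(X,T)$ on a compact metric space has the approximate product property if for all $\delta_1,\delta_2,\epsilon>0$ there is $M(\delta_1,\delta_2,\epsilon)>0$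 such that for every $n\ge M$, every $k\in\mathbb N$ and all points $x_1,\dots,x_k\in X$ there exist $0=t_0<t_1<\dots<t_k$ with $n\le t_i-t_{i-1}\le(1+\delta_1)n$ and $z\in X$ such that $\#\{0\le j<n: d(T^{t_{i-1}+j}z,T^jx_i)>\epsilon\}<\delta_2n$ for each $i=1,\dots,k$. *)

theory Defs
  imports "HOL-Analysis.Analysis"
begin

text \<open>Points of {0,1,2}^N are functions nat => nat; index j (from 0) stands for the
  coordinate x_(j+1) of the paper.\<close>

definition seq_metric :: "(nat \<Rightarrow> nat) \<Rightarrow> (nat \<Rightarrow> nat) \<Rightarrow> real" where
  "seq_metric x y = (\<Sum>j. \<bar>real (x j) - real (y j)\<bar> / 2 ^ (Suc j))"

definition shift :: "(nat \<Rightarrow> nat) \<Rightarrow> (nat \<Rightarrow> nat)" where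
  "shift x = (\<lambda>j. x (Suc j))"

definition language :: "(nat \<Rightarrow> nat) set \<Rightarrow> nat list set" where
  "language X = {w. \<exists>x\<in>X. \<exists>i. w = map x [i..<i + length w]}"

definition W_specification :: "nat list set \<Rightarrow> nat list set \<Rightarrow> bool" where
  "W_specification G L \<longleftrightarrow>
     (\<exists>\<tau>::nat. \<forall>u\<in>G. \<forall>v\<in>G. \<exists>w\<in>L. length w \<le> \<tau> \<and> u @ w @ v \<in> G)"

definition edit_step :: "'a list \<Rightarrow> 'a list \<Rightarrow> bool" where
  "edit_step v w \<longleftrightarrow>
     (\<exists>xs ys a b. v = xs @ [a] @ ys \<and> w = xs @ [b] @ ys) \<or>
     (\<exists>xs ys b. v = xs @ ys \<and> w = xs @ [b] @ ys) \<or>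
     (\<exists>xs ys a. v = xs @ [a] @ ys \<and> w = xs @ ys)"

definition edit_dist :: "'a list \<Rightarrow> 'a list \<Rightarrow> nat" where
  "edit_dist v w = (LEAST k. (edit_step ^^ k) v w)"

definition edit_approachable :: "nat list set \<Rightarrow> nat list set \<Rightarrow> bool" where
  "edit_approachable L G \<longleftrightarrow>
     (\<exists>g::nat \<Rightarrow> nat. mono g \<and> (\<lambda>n. real (g n) / real n) \<longlonglongrightarrow> 0 \<and>
        (\<forall>w\<in>L. \<exists>v\<in>G. edit_dist w v \<le> g (length w)))"

definition approx_product_property :: "'a set \<Rightarrow> ('a \<Rightarrow> 'a) \<Rightarrow> ('a \<Rightarrow> 'a \<Rightarrow> real) \<Rightarrow> bool" where
  "approx_product_property X T d \<longleftrightarrow>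
     (\<forall>\<delta>1>0. \<forall>\<delta>2>0. \<forall>\<epsilon>>0. \<exists>M::real. M > 0 \<and>
       (\<forall>n::nat. real n \<ge> M \<longrightarrow> (\<forall>k::nat. k \<ge> 1 \<longrightarrow> (\<forall>xs::nat \<Rightarrow> 'a. (\<forall>i\<in>{1..k}. xs i \<in> X) \<longrightarrow>
         (\<exists>t::nat \<Rightarrow> nat. t 0 = 0 \<and>
            (\<forall>i\<in>{1..k}. t (i - 1) < t i \<and> n \<le> t i - t (i - 1) \<and>
                          real (t i - t (i - 1)) \<le> (1 + \<delta>1) * real n) \<and>
            (\<exists>z\<in>X. \<forall>i\<in>{1..k}.
               real (card {j. j < n \<and> d ((T ^^ (t (i - 1) + j)) z) ((T ^^ j) (xs i)) > \<epsilon>})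
                 < \<delta>2 * real n))))))"

definition XF :: "(nat \<Rightarrow> nat) set" where
  "XF = {x. (\<forall>j. x j \<in> {0,1,2}) \<and>
            (\<forall>i. (x i, x (Suc i)) \<notin> {(1,2),(2,1)}) \<and>
            (\<forall>i n. n \<ge> 1 \<longrightarrow>
               real (card {j. j < n \<and> (x (i + j), x (i + j + 1)) \<in> {(0,0),(1,1),(2,2)}})
                 \<le> 100 + ln (real n))}"

definition GF :: "nat list set" where
  "GF = {concat (map (\<lambda>a. [0, a]) as) | as. as \<noteq> [] \<and> set as \<subseteq> {1,2}}"

end

theory Submission
  imports Defs
begin

fun Dd :: "nat list \<Rightarrow> nat" where
  "Dd (a#b#r) = (if a = b then 1 else 0) + Dd (b#r)" | "Dd _ = 0"
fun okl :: "nat list \<Rightarrow> bool" where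
  "okl (a#b#r) = ((a,b) \<notin> {(1,2),(2,1)} \<and> okl (b#r))" | "okl _ = True"
fun red :: "nat list \<Rightarrow> nat list" where
  "red (a#b#r) = (if a = b then red (b#r) else a # red (b#r))" | "red xs = xs"
fun alt :: "nat list \<Rightarrow> bool" where
  "alt (a#b#r) = ((a = 0) \<noteq> (b = 0) \<and> alt (b#r))" | "alt _ = True"

definition cc :: "nat list \<Rightarrow> nat list" where
  "cc as = concat (map (\<lambda>a. [0, a]) as)"

lemma edit_step_Cons: "edit_step u v \<Longrightarrow> edit_step (a#u) (a#v)"
  unfolding edit_step_def
  by (metis append_Cons)

lemma relpow_Cons: "(edit_step ^^ k) u v \<Longrightarrow> (edit_step ^^ k) (a#u) (a#v)"
proof (induction k arbitrary: v)
  case 0 then show ?case by simp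
next
  case (Suc k)
  from Suc.prems obtain y where "(edit_step ^^ k) u y" "edit_step y v" by (rule relpowp_Suc_E)
  then show ?case using Suc.IH edit_step_Cons relpowp_Suc_I by metis
qed

lemma edit_del: "edit_step (a#r) r"
  unfolding edit_step_def by (metis append.left_neutral append_Cons)

lemma edit_ins_front: "edit_step r (a#r)"
  unfolding edit_step_def by (metis append.left_neutral append_Cons)

lemma edit_ins_end: "edit_step r (r@[a])"
  unfolding edit_step_def by (metis append.right_neutral)

lemma red_edit: "(edit_step ^^ Dd w) w (red w)"
proof (induction w rule: red.induct)
  case (1 a b r)
  show ?case
  proof (cases "a = b")
    case True
    from 1 True have ih: "(edit_step ^^ Dd (b#r)) (b#r) (red (b#r))" by simp
    then have "(edit_step ^^ Suc (Dd (b#r))) (a#b#r) (red (b#r))"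
      using edit_del True by (metis relpowp_Suc_I2)
    then show ?thesis using True by simp
  next
    case False
    then show ?thesis using 1 relpow_Cons by simp
  qed
qed auto

lemma red_hd: "\<exists>u. red (b#r) = b # u"
  by (induction "b#r" arbitrary: b r rule: red.induct) auto

lemma red_alt: "okl w \<Longrightarrow> set w \<subseteq> {0,1,2} \<Longrightarrow> alt (red w) \<and> set (red w) \<subseteq> set w"
proof (induction w rule: red.induct)
  case (1 a b r)
  obtain u where u: "red (b#r) = b # u" using red_hd by blast
  show ?case
  proof (cases "a = b")
    case True
    then show ?thesis using 1 by auto
  next
    case False
    have "(a = 0) \<noteq> (b = 0)" using False 1(3,4) by auto
    then show ?thesis using 1 False u by auto
  qed
qed auto

lemma alt_tl: "alt (a#r) \<Longrightarrow> alt r"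
  by (cases r) auto

lemma cc_Cons: "cc (a#as) = 0 # a # cc as" by (simp add: cc_def)
lemma cc_append: "cc (as @ bs) = cc as @ cc bs" by (simp add: cc_def)
lemma cc_Nil: "cc [] = []" by (simp add: cc_def)

lemma alt_decomp: "alt u \<Longrightarrow> set u \<subseteq> {0,1,2} \<Longrightarrow> (u = [] \<or> hd u = 0) \<Longrightarrow>
   \<exists>as. set as \<subseteq> {1,2} \<and> (u = cc as \<or> u = cc as @ [0])"
proof (induction "length u" arbitrary: u rule: less_induct)
  case less
  show ?case
  proof (cases u)
    case Nil then show ?thesis by (intro exI[of _ "[]"]) (simp add: cc_Nil)
  next
    case (Cons c r)
    then have c0: "c = 0" using less.prems by simp
    show ?thesis
    proof (cases r)
      case Nil then show ?thesis using Cons c0 by (intro exI[of _ "[]"]) (simp add: cc_Nil)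
    next
      case (Cons a r')
      have a: "a \<noteq> 0" "a \<in> {1,2}" using less.prems \<open>u = c # r\<close> Cons c0 by auto
      have u: "u = 0 # a # r'" using \<open>u = c # r\<close> Cons c0 by simp
      have "alt (a # r')" using less.prems(1) u by simp
      then have h1: "alt r'" by (rule alt_tl)
      have h2: "r' = [] \<or> hd r' = 0"
        using less.prems(1) u a by (cases r') auto
      have h3: "set r' \<subseteq> {0,1,2}" using less.prems(2) u by simp
      have h4: "length r' < length u" using u by simp
      have "\<exists>as. set as \<subseteq> {1,2} \<and> (r' = cc as \<or> r' = cc as @ [0])"
        by (rule less.hyps[OF h4 h1 h3 h2])
      then obtain as where as1: "set as \<subseteq> {1,2}" and as2: "r' = cc as \<or> r' = cc as @ [0]"
        by blast
      have s: "set (a#as) \<subseteq> {1,2}" using as1 a by simp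
      from as2 show ?thesis
      proof
        assume "r' = cc as"
        then have "u = cc (a#as)" using u by (simp add: cc_Cons)
        then show ?thesis using s by blast
      next
        assume "r' = cc as @ [0]"
        then have "u = cc (a#as) @ [0]" using u by (simp add: cc_Cons)
        then show ?thesis using s by blast
      qed
    qed
  qed
qed

lemma GF_cc: "as \<noteq> [] \<Longrightarrow> set as \<subseteq> {1,2} \<Longrightarrow> cc as \<in> GF"
  unfolding GF_def cc_def by (intro CollectI exI[of _ as]) simp

lemma alt_to_GF: "alt u \<Longrightarrow> set u \<subseteq> {0,1,2} \<Longrightarrow> \<exists>v\<in>GF. \<exists>k\<le>2. (edit_step ^^ k) u v"
proof (cases u)
  case Nil
  have "(edit_step ^^ Suc (Suc 0)) [] [0,1]"
    apply (rule relpowp_Suc_I2[of _ _ "[1]"])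
     apply (rule edit_ins_front[of "[]" 1, simplified])
    apply (rule relpowp_Suc_I2[of _ _ "[0,1]"])
     apply (rule edit_ins_front)
    by simp
  note h = this
  have "cc [1] \<in> GF" by (rule GF_cc) auto
  then have g: "[0,1] \<in> GF" by (simp add: cc_def)
  have "Suc (Suc 0) \<le> (2::nat)" by simp
  then show ?thesis unfolding Nil using h g by blast
next
  case (Cons c r)
  assume al: "alt u" and st: "set u \<subseteq> {0,1,2}"
  obtain u0 k0 where u0: "alt u0" "set u0 \<subseteq> {0,1,2}" "hd u0 = 0" "u0 \<noteq> []" "k0 \<le> 1"
     "(edit_step ^^ k0) u u0"
  proof (cases "c = 0")
    case True
    then show ?thesis using that[of u 0] al st Cons by simp
  next
    case False
    then have "alt (0#u)" using al Cons by simp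
    moreover have "(edit_step ^^ Suc 0) u (0#u)" by (rule relpowp_Suc_I2[of edit_step, OF edit_ins_front]) simp
    ultimately show ?thesis using that[of "0#u" "Suc 0"] st by simp
  qed
  have "\<exists>as. set as \<subseteq> {1,2} \<and> (u0 = cc as \<or> u0 = cc as @ [0])"
    by (rule alt_decomp[OF u0(1) u0(2)]) (use u0(3) in simp)
  then obtain as where as: "set as \<subseteq> {1,2}" "u0 = cc as \<or> u0 = cc as @ [0]"
    by blast
  show ?thesis
  proof (cases "u0 = cc as")
    case True
    have "as \<noteq> []"
    proof
      assume "as = []"
      then have "u0 = []" using True by (simp add: cc_Nil)
      then show False using u0(4) by simp
    qed
    then have g: "u0 \<in> GF" using True GF_cc[OF _ as(1)] by simp
    have "k0 \<le> 2" using u0(5) by simp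
    then show ?thesis using g u0(6) by blast
  next
    case False
    then have e: "u0 = cc as @ [0]" using as by auto
    have "edit_step u0 (cc (as @ [1]))" using edit_ins_end[of u0 1] e by (simp add: cc_append cc_def)
    then have r: "(edit_step ^^ Suc k0) u (cc (as @ [1]))" by (rule relpowp_Suc_I[OF u0(6)])
    have g: "cc (as@[1]) \<in> GF" using as(1) by (intro GF_cc) auto
    have "Suc k0 \<le> 2" using u0(5) by simp
    then show ?thesis using g r by blast
  qed
qed

lemma Dd_sum: "Dd w = (\<Sum>j< length w - 1. if w!j = w!Suc j then 1 else 0)"
proof (induction w rule: Dd.induct)
  case (1 a b r)
  have "length (a#b#r) - 1 = Suc (length (b#r) - 1)" by simp
  then show ?case using 1 by (simp only: sum.lessThan_Suc_shift) simp
qed auto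

lemma map_upt_Suc': "map x [i..<i + Suc m] = x i # map x [Suc i..<Suc i + m]"
proof -
  have "[i..<i + Suc m] = i # [Suc i..<Suc i + m]" by (simp add: upt_conv_Cons del: upt_Suc)
  then show ?thesis by simp
qed

lemma okl_map: "\<forall>i. (x i, x (Suc i)) \<notin> {(1,2),(2,1)} \<Longrightarrow> okl (map x [i..<i+m])"
proof (induction m arbitrary: i)
  case 0 then show ?case by simp
next
  case (Suc m)
  show ?case
  proof (cases m)
    case 0 then show ?thesis by simp
  next
    case (Suc m')
    have "map x [i..<i + Suc m] = x i # x (Suc i) # map x [Suc (Suc i)..<Suc (Suc i) + m']"
      using Suc map_upt_Suc'[of x i m] map_upt_Suc'[of x "Suc i" m'] by (simp del: upt_Suc)
    moreover have "okl (map x [Suc i..<Suc i + m])" using Suc.IH Suc.prems by blast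
    moreover have "map x [Suc i..<Suc i + m] = x (Suc i) # map x [Suc (Suc i)..<Suc (Suc i) + m']"
      using Suc map_upt_Suc'[of x "Suc i" m'] by (simp del: upt_Suc)
    ultimately show ?thesis using Suc.prems by simp
  qed
qed

lemma card_sum: "card {j. j < (m::nat) \<and> P j} = (\<Sum>j<m. if P j then 1 else 0 :: nat)"
proof -
  have "{j. j < m \<and> P j} = {..<m} \<inter> {j. P j}" by auto
  moreover have "card ({..<m} \<inter> {j. P j}) = (\<Sum>j \<in> {..<m} \<inter> {j. P j}. 1::nat)" by simp
  moreover have "(\<Sum>j \<in> {..<m} \<inter> {j. P j}. 1::nat) = (\<Sum>j<m. if j \<in> {j. P j} then 1 else 0)"
    using sum.inter_restrict[of "{..<m}" "\<lambda>_. 1::nat" "{j. P j}"] by simp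
  ultimately show ?thesis by simp
qed

lemma Dd_map_le: "Dd (map x [i..<i+m]) \<le> card {j. j < m \<and> x (i+j) = x (i+j+1)}"
proof -
  let ?w = "map x [i..<i+m]"
  have "Dd ?w = (\<Sum>j< m - 1. if ?w!j = ?w!Suc j then 1 else 0)" by (simp add: Dd_sum)
  also have "\<dots> = (\<Sum>j< m - 1. if x (i+j) = x (i+j+1) then 1 else 0)"
    by (rule sum.cong) auto
  also have "\<dots> \<le> (\<Sum>j< m. if x (i+j) = x (i+j+1) then 1 else 0)"
    by (rule sum_mono2) auto
  also have "\<dots> = card {j. j < m \<and> x (i+j) = x (i+j+1)}" by (simp add: card_sum)
  finally show ?thesis .
qed

lemma XF_vals: "x \<in> XF \<Longrightarrow> x j \<in> {0,1,2}" unfolding XF_def by blast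
lemma XF_adj: "x \<in> XF \<Longrightarrow> (x i, x (Suc i)) \<notin> {(1,2),(2,1)}" unfolding XF_def by blast
lemma diag_eq: "a \<in> {0,1,2} \<Longrightarrow> (a = b) = ((a,b) \<in> {(0::nat,0::nat),(1,1),(2,2)})" by auto

lemma XF_cnt: "x \<in> XF \<Longrightarrow> n \<ge> 1 \<Longrightarrow>
   real (card {j. j < n \<and> x (i + j) = x (i + j + 1)}) \<le> 100 + ln (real n)"
proof -
  assume x: "x \<in> XF" and n: "n \<ge> 1"
  have "{j. j < n \<and> x (i + j) = x (i + j + 1)} =
        {j. j < n \<and> (x (i + j), x (i + j + 1)) \<in> {(0,0),(1,1),(2,2)}}"
    by (intro Collect_cong conj_cong refl) (rule diag_eq[OF XF_vals[OF x]])
  then show ?thesis using x n unfolding XF_def by simp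
qed

lemma lang_word:
  assumes "w \<in> language XF"
  shows "okl w \<and> set w \<subseteq> {0,1,2} \<and> Dd w \<le> 100 + nat \<lfloor>ln (real (length w))\<rfloor>"
proof -
  define m where "m = length w"
  from assms obtain x i where x: "x \<in> XF" and w: "w = map x [i..<i + m]"
    unfolding language_def m_def by blast
  let ?m = "length w"
  have okm: "okl (map x [i..<i + m])" by (rule okl_map) (use XF_adj[OF x] in blast)
  have "okl w" using okm w by simp
  moreover have "set w \<subseteq> {0,1,2}"
  proof
    fix a assume "a \<in> set w"
    then obtain j where aj: "a = x j" using w by auto
    show "a \<in> {0,1,2}" unfolding aj by (rule XF_vals[OF x])
  qed
  moreover have "Dd w \<le> 100 + nat \<lfloor>ln (real ?m)\<rfloor>"
  proof (cases "?m = 0")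
    case True then show ?thesis by simp
  next
    case False
    have m1: "?m \<ge> 1" using False by linarith
    have lw: "?m = m" by (simp add: m_def)
    have "Dd w \<le> card {j. j < m \<and> x (i+j) = x (i+j+1)}" by (subst w) (rule Dd_map_le)
    then have "Dd w \<le> card {j. j < ?m \<and> x (i+j) = x (i+j+1)}" by (simp only: lw)
    then have "real (Dd w) \<le> real (card {j. j < ?m \<and> x (i+j) = x (i+j+1)})" by simp
    also have "\<dots> \<le> 100 + ln (real ?m)" using XF_cnt[OF x m1] by simp
    finally have "real (Dd w) \<le> 100 + ln (real ?m)" .
    then have "int (Dd w) \<le> \<lfloor>100 + ln (real ?m)\<rfloor>" by (subst le_floor_iff) simp
    moreover have "ln (real ?m) \<ge> 0" using m1 by simp
    ultimately show ?thesis by linarith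
  qed
  ultimately show ?thesis by blast
qed

lemma edit_approach: "edit_approachable (language XF) GF"
  unfolding edit_approachable_def
proof (intro exI[of _ "\<lambda>n. 102 + nat \<lfloor>ln (real n)\<rfloor>"] conjI ballI)
  show "mono (\<lambda>n::nat. 102 + nat \<lfloor>ln (real n)\<rfloor>)"
  proof (rule monoI)
    fix a b :: nat assume ab: "a \<le> b"
    have "ln (real a) \<le> ln (real b)"
    proof (cases "a = 0")
      case True then show ?thesis using ab by (cases "b = 0") auto
    next
      case False then show ?thesis using ab by simp
    qed
    then show "102 + nat \<lfloor>ln (real a)\<rfloor> \<le> 102 + nat \<lfloor>ln (real b)\<rfloor>"
      by (simp add: floor_mono nat_mono)
  qed
next
  have lim0: "(\<lambda>n::nat. 102 / real n + ln (real n) / real n) \<longlonglongrightarrow> 0"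
    using tendsto_add[OF lim_const_over_n[of 102] lim_ln_over_n] by simp
  have "(\<lambda>n::nat. (102 + ln (real n)) / real n) = (\<lambda>n::nat. 102 / real n + ln (real n) / real n)"
    by (simp add: add_divide_distrib)
  then have lim: "(\<lambda>n::nat. (102 + ln (real n)) / real n) \<longlonglongrightarrow> 0" using lim0 by simp
  show "(\<lambda>n. real (102 + nat \<lfloor>ln (real n)\<rfloor>) / real n) \<longlonglongrightarrow> 0"
  proof (rule tendsto_sandwich[OF _ _ tendsto_const lim])
    show "\<forall>\<^sub>F n in sequentially. 0 \<le> real (102 + nat \<lfloor>ln (real n)\<rfloor>) / real n" by simp
    show "\<forall>\<^sub>F n in sequentially. real (102 + nat \<lfloor>ln (real n)\<rfloor>) / real n \<le> (102 + ln (real n)) / real n"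
    proof (rule eventually_sequentiallyI[of 1])
      fix n :: nat assume n: "1 \<le> n"
      have "ln (real n) \<ge> 0" using n by simp
      then have "real (nat \<lfloor>ln (real n)\<rfloor>) \<le> ln (real n)" by linarith
      then show "real (102 + nat \<lfloor>ln (real n)\<rfloor>) / real n \<le> (102 + ln (real n)) / real n"
        using n by (simp add: divide_right_mono)
    qed
  qed
next
  fix w assume w: "w \<in> language XF"
  note L = lang_word[OF w]
  have ar: "alt (red w)" "set (red w) \<subseteq> {0,1,2}" using red_alt L by blast+
  obtain v k where v: "v \<in> GF" "k \<le> 2" "(edit_step ^^ k) (red w) v"
    using alt_to_GF[OF ar] by blast
  have "(edit_step ^^ (Dd w + k)) w v"
    using red_edit[of w] v(3) by (auto simp: relpowp_add)
  then have "edit_dist w v \<le> Dd w + k" unfolding edit_dist_def by (rule Least_le)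
  then show "\<exists>v\<in>GF. edit_dist w v \<le> 102 + nat \<lfloor>ln (real (length w))\<rfloor>"
    using v L by (intro bexI[of _ v]) auto
qed

lemma alt_in_XF:
  assumes v: "\<forall>j. x j \<in> {0,1,2}" and p: "\<forall>j. (x j = 0) = even j"
  shows "x \<in> XF"
proof -
  have a: "(x i, x (Suc i)) \<notin> {(1,2),(2,1)}" for i
    using p[rule_format, of i] p[rule_format, of "Suc i"] by auto
  have e1: "(x (i + j), x (i + j + 1)) \<notin> {(0,0),(1,1),(2,2)}" for i j
    using p[rule_format, of "i+j"] p[rule_format, of "i+j+1"] by auto
  have e: "{j. j < n \<and> (x (i + j), x (i + j + 1)) \<in> {(0,0),(1,1),(2,2)}} = {}" for i n
    using e1 by blast
  have c: "real (card {j. j < n \<and> (x (i + j), x (i + j + 1)) \<in> {(0,0),(1,1),(2,2)}}) \<le> 100 + ln (real n)"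
    if n1: "n \<ge> 1" for i n
  proof -
    have "ln (real n) \<ge> 0" using n1 by simp
    then show ?thesis by (simp only: e) simp
  qed
  show ?thesis unfolding XF_def using v a c by blast
qed

lemma cc_length: "length (cc as) = 2 * length as"
  by (induction as) (auto simp: cc_Cons cc_Nil)

lemma cc_nth: "j < length (cc as) \<Longrightarrow> cc as ! j = (if even j then 0 else as ! (j div 2))"
proof (induction as arbitrary: j)
  case Nil then show ?case by (simp add: cc_Nil)
next
  case (Cons a as)
  show ?case
  proof (cases j)
    case 0 then show ?thesis by (simp add: cc_Cons)
  next
    case (Suc j1)
    show ?thesis
    proof (cases j1)
      case 0 then show ?thesis using Suc by (simp add: cc_Cons)
    next
      case (Suc j2)
      have "j2 < length (cc as)" using Cons.prems \<open>j = Suc j1\<close> Suc by (simp add: cc_Cons)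
      then show ?thesis using Cons.IH[of j2] \<open>j = Suc j1\<close> Suc by (simp add: cc_Cons)
    qed
  qed
qed

lemma GF_lang: "GF \<subseteq> language XF"
proof
  fix v assume "v \<in> GF"
  then obtain as where as: "v = cc as" "as \<noteq> []" "set as \<subseteq> {1,2}"
    unfolding GF_def cc_def by blast
  define x where "x j = (if even j then 0 else if j div 2 < length as then as ! (j div 2) else 1)" for j
  have mem: "as ! (j div 2) \<in> {1,2}" if "j div 2 < length as" for j
    using as(3) nth_mem[OF that] by blast
  have "x \<in> XF"
  proof (rule alt_in_XF)
    show "\<forall>j. x j \<in> {0,1,2}"
    proof
      fix j show "x j \<in> {0,1,2}"
      proof (cases "even j")
        case True then show ?thesis unfolding x_def by simp
      next
        case False
        show ?thesis
        proof (cases "j div 2 < length as")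
          case True then have "x j = as ! (j div 2)" using False unfolding x_def by simp
          then show ?thesis using mem[OF True] by simp
        next
          case F2: False then show ?thesis using False unfolding x_def by simp
        qed
      qed
    qed
    show "\<forall>j. (x j = 0) = even j"
    proof
      fix j show "(x j = 0) = even j"
      proof (cases "even j")
        case True then show ?thesis unfolding x_def by simp
      next
        case False
        show ?thesis
        proof (cases "j div 2 < length as")
          case True then have "x j = as ! (j div 2)" using False unfolding x_def by simp
          then show ?thesis using mem[OF True] False by auto
        next
          case F2: False then show ?thesis using False unfolding x_def by simp
        qed
      qed
    qed
  qed
  moreover have "v = map x [0..<0 + length v]"
  proof (rule nth_equalityI)
    fix j assume j: "j < length v"
    have lv: "length v = 2 * length as" using as(1) cc_length by simp
    have jd: "j div 2 < length as" using j lv by simp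
    have "v ! j = (if even j then 0 else as ! (j div 2))" using as(1) cc_nth[of j as] j by simp
    also have "\<dots> = x j" unfolding x_def using jd by simp
    also have "\<dots> = map x [0..<0 + length v] ! j" using j by simp
    finally show "v ! j = map x [0..<0 + length v] ! j" .
  qed simp
  ultimately show "v \<in> language XF" unfolding language_def by blast
qed

lemma Wspec: "W_specification GF (language XF)"
proof -
  have x0: "(\<lambda>j::nat. j mod 2) \<in> XF" by (rule alt_in_XF) auto
  have "[] = map (\<lambda>j::nat. j mod 2) [0..<0 + length ([]::nat list)]" by simp
  then have e: "[] \<in> language XF" unfolding language_def using x0 by blast
  have g: "u @ [] @ v \<in> GF" if u: "u \<in> GF" and v: "v \<in> GF" for u v
  proof -
    obtain as where "u = cc as" "as \<noteq> []" "set as \<subseteq> {1,2}" using u unfolding GF_def cc_def by blast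
    moreover obtain bs where "v = cc bs" "bs \<noteq> []" "set bs \<subseteq> {1,2}" using v unfolding GF_def cc_def by blast
    ultimately show ?thesis using GF_cc[of "as @ bs"] by (simp add: cc_append)
  qed
  have "\<forall>u\<in>GF. \<forall>v\<in>GF. \<exists>w\<in>language XF. length w \<le> 0 \<and> u @ w @ v \<in> GF"
  proof (intro ballI)
    fix u v assume "u \<in> GF" "v \<in> GF"
    then have "u @ [] @ v \<in> GF" by (rule g)
    then show "\<exists>w\<in>language XF. length w \<le> 0 \<and> u @ w @ v \<in> GF" using e by force
  qed
  then show ?thesis unfolding W_specification_def by blast
qed

lemma shift_pow: "(shift ^^ m) x = (\<lambda>j. x (m + j))"
  by (induction m) (auto simp: shift_def)

lemma metric_ge:
  assumes a: "\<forall>j. a j \<le> 2" and b: "\<forall>j. b j \<le> 2" and ne: "a 0 \<noteq> b 0"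
  shows "seq_metric a b \<ge> 1/2"
proof -
  define f where "f j = \<bar>real (a j) - real (b j)\<bar> / 2 ^ (Suc j)" for j
  have bound: "norm (f j) \<le> (1/2) ^ j" for j
  proof -
    have "real (a j) \<le> 2" "real (b j) \<le> 2" using a b by simp_all
    then have "\<bar>real (a j) - real (b j)\<bar> \<le> 2" by linarith
    then have "f j \<le> 2 / 2 ^ Suc j" unfolding f_def by (rule divide_right_mono) simp
    also have "\<dots> = (1/2) ^ j" by (simp add: power_one_over)
    finally show ?thesis unfolding f_def by simp
  qed
  have sm: "summable f"
    by (rule summable_comparison_test[OF _ summable_geometric[of "1/2"]]) (use bound in auto)
  have "f 0 \<ge> 1/2"
  proof -
    have "\<bar>real (a 0) - real (b 0)\<bar> \<ge> 1" using ne by linarith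
    then show ?thesis unfolding f_def by simp
  qed
  moreover have "sum f {0} \<le> suminf f"
    by (rule sum_le_suminf[OF sm]) (auto simp: f_def)
  ultimately show ?thesis unfolding seq_metric_def f_def by simp
qed

lemma alt_window:
  assumes v: "\<forall>j. z j \<in> {0,1,2::nat}" and ad: "\<forall>j. (z j, z (Suc j)) \<notin> {(1,2),(2,1)}"
    and nd: "\<forall>j. Suc j < n \<longrightarrow> z (s + j) \<noteq> z (s + Suc j)"
  shows "j < n \<Longrightarrow> (z (s + j) = 0) = ((z s = 0) = even j)"
proof (induction j)
  case 0 then show ?case by simp
next
  case (Suc j)
  have "z (s + j) \<noteq> z (s + Suc j)" using nd Suc.prems by blast
  moreover have "(z (s+j), z (Suc (s+j))) \<notin> {(1,2),(2,1)}" using ad by blast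
  moreover have "z (s+j) \<in> {0,1,2}" "z (s + Suc j) \<in> {0,1,2}" using v by blast+
  ultimately have "(z (s + Suc j) = 0) = (z (s + j) \<noteq> 0)" by auto
  then show ?case using Suc by simp
qed

lemma window_mismatch:
  assumes v: "\<forall>j. z j \<in> {0,1,2::nat}" and ad: "\<forall>j. (z j, z (Suc j)) \<notin> {(1,2),(2,1)}"
    and nd: "\<forall>j. Suc j < n \<longrightarrow> z (s + j) \<noteq> z (s + Suc j)"
    and y: "\<forall>j. y j = (if j < n div 2 then j mod 2 else Suc j mod 2)"
  shows "card {j. j < n \<and> z (s + j) \<noteq> y j} \<ge> n div 2"
proof (cases "z s = 0")
  case True
  have "{n div 2..<n} \<subseteq> {j. j < n \<and> z (s + j) \<noteq> y j}"
  proof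
    fix j assume j: "j \<in> {n div 2..<n}"
    have "(z (s + j) = 0) = even j" using alt_window[OF v ad nd, of j] j True by simp
    moreover have "y j = Suc j mod 2" using y j by simp
    moreover have "Suc j mod 2 = (if even j then 1 else 0)" by presburger
    ultimately show "j \<in> {j. j < n \<and> z (s + j) \<noteq> y j}" using j by (cases "even j") auto
  qed
  then have "card {n div 2..<n} \<le> card {j. j < n \<and> z (s + j) \<noteq> y j}"
    by (rule card_mono[rotated]) auto
  then show ?thesis by simp
next
  case False
  have "{0..<n div 2} \<subseteq> {j. j < n \<and> z (s + j) \<noteq> y j}"
  proof
    fix j assume j: "j \<in> {0..<n div 2}"
    have "(z (s + j) = 0) = odd j" using alt_window[OF v ad nd, of j] j False by simp
    moreover have "y j = j mod 2" using y j by simp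
    moreover have "j mod 2 = (if even j then 0 else 1)" by presburger
    ultimately show "j \<in> {j. j < n \<and> z (s + j) \<noteq> y j}" using j by (cases "even j") auto
  qed
  then have "card {0..<n div 2} \<le> card {j. j < n \<and> z (s + j) \<noteq> y j}"
    by (rule card_mono[rotated]) auto
  then show ?thesis by simp
qed

lemma y_in_XF:
  assumes y: "\<forall>j. y j = (if j < N then j mod 2 else Suc j mod 2)"
  shows "y \<in> XF"
proof -
  have v2: "y j < 2" for j using y by simp
  have v: "\<forall>j. y j \<in> {0,1,2}"
  proof
    fix j show "y j \<in> {0,1,2}" using v2[of j] by auto
  qed
  have a: "(y i, y (Suc i)) \<notin> {(1,2),(2,1)}" for i using v2[of i] v2[of "Suc i"] by auto
  have c: "real (card {j. j < n \<and> (y (i + j), y (i + j + 1)) \<in> {(0,0),(1,1),(2,2)}}) \<le> 100 + ln (real n)"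
    if n: "n \<ge> 1" for i n
  proof -
    have "{j. j < n \<and> (y (i + j), y (i + j + 1)) \<in> {(0,0),(1,1),(2,2)}} \<subseteq> {N - 1 - i}"
    proof
      fix j assume "j \<in> {j. j < n \<and> (y (i + j), y (i + j + 1)) \<in> {(0,0),(1,1),(2,2)}}"
      then have eq: "y (i + j) = y (i + j + 1)" by auto
      have "i + j + 1 = N"
      proof (rule ccontr)
        assume ne: "i + j + 1 \<noteq> N"
        show False
        proof (cases "i + j + 1 < N")
          case True
          then have "y (i+j) = (i+j) mod 2" "y (i+j+1) = (i+j+1) mod 2" using y by simp_all
          moreover have "(i+j) mod 2 \<noteq> (i+j+1) mod 2" by presburger
          ultimately show False using eq by simp
        next
          case False
          then have "y (i+j) = Suc (i+j) mod 2" "y (i+j+1) = Suc (i+j+1) mod 2" using y ne by simp_all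
          moreover have "Suc (i+j) mod 2 \<noteq> Suc (i+j+1) mod 2" by presburger
          ultimately show False using eq by simp
        qed
      qed
      then show "j \<in> {N - 1 - i}" by simp
    qed
    then have "card {j. j < n \<and> (y (i + j), y (i + j + 1)) \<in> {(0,0),(1,1),(2,2)}} \<le> card {N - 1 - i}"
      by (intro card_mono) auto
    then have "card {j. j < n \<and> (y (i + j), y (i + j + 1)) \<in> {(0,0),(1,1),(2,2)}} \<le> 1"
      by simp
    moreover have "ln (real n) \<ge> 0" using n by simp
    ultimately show ?thesis by linarith
  qed
  show ?thesis unfolding XF_def using v a c by blast
qed


lemma t_mono:
  fixes t :: "nat \<Rightarrow> nat" and k a b :: nat
  assumes "\<forall>i\<in>{1..k}. t (i - 1) < (t i :: nat)"
  shows "a \<le> b \<Longrightarrow> b \<le> k \<Longrightarrow> t a \<le> t b"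
proof (induction b)
  case 0 then show ?case by simp
next
  case (Suc b)
  show ?case
  proof (cases "a = Suc b")
    case True then show ?thesis by simp
  next
    case False
    then have "t a \<le> t b" using Suc by simp
    moreover have "Suc b \<in> {1..k}" using Suc.prems by simp
    then have "t (Suc b - 1) < t (Suc b)" using assms by blast
    then have "t b < t (Suc b)" by simp
    ultimately show ?thesis by simp
  qed
qed

lemma t_bound:
  fixes t :: "nat \<Rightarrow> nat" and k b c :: nat
  assumes "\<forall>i\<in>{1..k}. t i \<le> t (i - 1) + c" and "t 0 = (0::nat)"
  shows "b \<le> k \<Longrightarrow> t b \<le> c * b"
proof (induction b)
  case 0 then show ?case using assms by simp
next
  case (Suc b)
  have "Suc b \<in> {1..k}" using Suc.prems by simp
  then have "t (Suc b) \<le> t (Suc b - 1) + c" using assms(1) by blast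
  then have "t (Suc b) \<le> t b + c" by simp
  then show ?case using Suc by simp
qed

lemma ln_half: "(x::real) > 0 \<Longrightarrow> ln x < x / 2"
proof -
  assume x: "x > 0"
  have "ln x = ln 2 + ln (x / 2)" using x by (simp add: ln_div)
  also have "ln (x/2) \<le> x/2 - 1" using x by (intro ln_le_minus_one) simp
  finally show ?thesis using ln_2_less_1 by linarith
qed

lemma not_app: "\<not> approx_product_property XF shift seq_metric"
proof
  assume H: "approx_product_property XF shift seq_metric"
  note H' = H[unfolded approx_product_property_def, rule_format, of 1 "1/4" "1/4"]
  have "\<exists>M::real. M > 0 \<and>
       (\<forall>n::nat. real n \<ge> M \<longrightarrow> (\<forall>k::nat. k \<ge> 1 \<longrightarrow> (\<forall>xs::nat \<Rightarrow> (nat \<Rightarrow> nat). (\<forall>i\<in>{1..k}. xs i \<in> XF) \<longrightarrow>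
         (\<exists>t::nat \<Rightarrow> nat. t 0 = 0 \<and>
            (\<forall>i\<in>{1..k}. t (i - 1) < t i \<and> n \<le> t i - t (i - 1) \<and>
                          real (t i - t (i - 1)) \<le> (1 + 1) * real n) \<and>
            (\<exists>z\<in>XF. \<forall>i\<in>{1..k}.
               real (card {j. j < n \<and> seq_metric ((shift ^^ (t (i - 1) + j)) z) ((shift ^^ j) (xs i)) > 1/4})
                 < 1/4 * real n)))))"
    by (rule H') simp_all
  then obtain M :: real where HM: "\<forall>n::nat. real n \<ge> M \<longrightarrow> (\<forall>k::nat. k \<ge> 1 \<longrightarrow> (\<forall>xs::nat \<Rightarrow> (nat \<Rightarrow> nat). (\<forall>i\<in>{1..k}. xs i \<in> XF) \<longrightarrow>
         (\<exists>t::nat \<Rightarrow> nat. t 0 = 0 \<and>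
            (\<forall>i\<in>{1..k}. t (i - 1) < t i \<and> n \<le> t i - t (i - 1) \<and>
                          real (t i - t (i - 1)) \<le> (1 + 1) * real n) \<and>
            (\<exists>z\<in>XF. \<forall>i\<in>{1..k}.
               real (card {j. j < n \<and> seq_metric ((shift ^^ (t (i - 1) + j)) z) ((shift ^^ j) (xs i)) > 1/4})
                 < 1/4 * real n))))"
    by blast
  define n where "n = nat \<lceil>M\<rceil> + 2"
  have nM: "real n \<ge> M" unfolding n_def by linarith
  have n2: "n \<ge> 2" unfolding n_def by simp
  define y where "y j = (if j < n div 2 then j mod 2 else Suc j mod 2)" for j
  have yspec: "\<forall>j. y j = (if j < n div 2 then j mod 2 else Suc j mod 2)" by (simp add: y_def)
  have yX: "y \<in> XF" by (rule y_in_XF[OF yspec])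
  define k where "k = 4 * n + 204"
  have k1: "k \<ge> 1" unfolding k_def by simp
  have "\<exists>t::nat \<Rightarrow> nat. t 0 = 0 \<and>
            (\<forall>i\<in>{1..k}. t (i - 1) < t i \<and> n \<le> t i - t (i - 1) \<and>
                          real (t i - t (i - 1)) \<le> (1 + 1) * real n) \<and>
            (\<exists>z\<in>XF. \<forall>i\<in>{1..k}.
               real (card {j. j < n \<and> seq_metric ((shift ^^ (t (i - 1) + j)) z) ((shift ^^ j) ((\<lambda>_. y) i)) > 1/4})
                 < 1/4 * real n)"
  proof -
    note E1 = mp[OF spec[OF HM, of n] nM]
    note E2 = mp[OF spec[OF E1, of k] k1]
    have XFall: "\<forall>i\<in>{1..k}. y \<in> XF" using yX by blast
    note E3 = mp[OF spec[OF E2, of "\<lambda>_. y"] XFall]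
    show ?thesis using E3 by simp
  qed
  then obtain t z where t0: "t 0 = 0"
    and ti: "\<forall>i\<in>{1..k}. t (i - 1) < t i \<and> n \<le> t i - t (i - 1) \<and>
                          real (t i - t (i - 1)) \<le> (1 + 1) * real n"
    and zX: "z \<in> XF"
    and zi: "\<forall>i\<in>{1..k}.
               real (card {j. j < n \<and> seq_metric ((shift ^^ (t (i - 1) + j)) z) ((shift ^^ j) y) > 1/4})
                 < 1/4 * real n"
    by auto
  have tlt: "\<forall>i\<in>{1..k}. t (i - 1) < t i" using ti by blast
  have tn: "t (i - 1) + n \<le> t i" if "i \<in> {1..k}" for i
  proof -
    have "t (i - 1) < t i \<and> n \<le> t i - t (i - 1)" using ti that by blast
    then show ?thesis by arith
  qed
  have t2: "\<forall>i\<in>{1..k}. t i \<le> t (i - 1) + 2 * n"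
  proof
    fix i assume i: "i \<in> {1..k}"
    have "real (t i - t (i - 1)) \<le> (1 + 1) * real n" using ti i by blast
    then have "real (t i - t (i - 1)) \<le> real (2 * n)" by simp
    then have "t i - t (i - 1) \<le> 2 * n" by (simp only: of_nat_le_iff)
    then show "t i \<le> t (i - 1) + 2 * n" by simp
  qed
  have zv: "\<forall>j. z j \<in> {0,1,2}" using XF_vals[OF zX] by blast
  have za: "\<forall>j. (z j, z (Suc j)) \<notin> {(1,2),(2,1)}" using XF_adj[OF zX] by blast
  have yv: "\<forall>j. y j \<le> 2" by (simp add: y_def)
  have zv2: "\<forall>j. z j \<le> 2"
  proof
    fix j show "z j \<le> 2" using XF_vals[OF zX, of j] by auto
  qed
  have defect: "\<exists>j. t (i - 1) \<le> j \<and> Suc j < t (i - 1) + n \<and> z j = z (Suc j)" if i: "i \<in> {1..k}" for i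
  proof (rule ccontr)
    let ?s = "t (i - 1)"
    assume neg: "\<not> (\<exists>j. t (i - 1) \<le> j \<and> Suc j < t (i - 1) + n \<and> z j = z (Suc j))"
    have nd: "\<forall>j. Suc j < n \<longrightarrow> z (?s + j) \<noteq> z (?s + Suc j)"
    proof (intro allI impI)
      fix j assume jn: "Suc j < n"
      have "\<not> (?s \<le> ?s + j \<and> Suc (?s + j) < ?s + n \<and> z (?s + j) = z (Suc (?s + j)))"
        using neg by blast
      moreover have "?s \<le> ?s + j" "Suc (?s + j) < ?s + n" using jn by simp_all
      ultimately show "z (?s + j) \<noteq> z (?s + Suc j)" by simp
    qed
    have c1: "card {j. j < n \<and> z (?s + j) \<noteq> y j} \<ge> n div 2"
      by (rule window_mismatch[OF zv za nd yspec])
    have sub: "{j. j < n \<and> z (?s + j) \<noteq> y j} \<subseteq>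
        {j. j < n \<and> seq_metric ((shift ^^ (?s + j)) z) ((shift ^^ j) y) > 1/4}"
    proof
      fix j assume j: "j \<in> {j. j < n \<and> z (?s + j) \<noteq> y j}"
      have "seq_metric (\<lambda>m. z (?s + j + m)) (\<lambda>m. y (j + m)) \<ge> 1/2"
        using j by (intro metric_ge) (auto simp: zv2 yv)
      then show "j \<in> {j. j < n \<and> seq_metric ((shift ^^ (?s + j)) z) ((shift ^^ j) y) > 1/4}"
        using j by (simp add: shift_pow)
    qed
    have "card {j. j < n \<and> z (?s + j) \<noteq> y j} \<le>
        card {j. j < n \<and> seq_metric ((shift ^^ (?s + j)) z) ((shift ^^ j) y) > 1/4}"
      by (rule card_mono[OF _ sub]) simp
    then have "n div 2 \<le> card {j. j < n \<and> seq_metric ((shift ^^ (?s + j)) z) ((shift ^^ j) y) > 1/4}"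
      using c1 by linarith
    moreover have "4 * (n div 2) \<ge> n" using n2 by presburger
    ultimately have "real n \<le> 4 * real (card {j. j < n \<and> seq_metric ((shift ^^ (?s + j)) z) ((shift ^^ j) y) > 1/4})"
      by linarith
    then show False using zi[rule_format, OF i] by linarith
  qed
  then have "\<forall>i\<in>{1..k}. \<exists>j. t (i - 1) \<le> j \<and> Suc j < t (i - 1) + n \<and> z j = z (Suc j)" by blast
  then obtain jj where jj: "\<forall>i\<in>{1..k}. t (i - 1) \<le> jj i \<and> Suc (jj i) < t (i - 1) + n \<and> z (jj i) = z (Suc (jj i))"
    by (metis bchoice)
  have lt: "jj i1 < jj i2" if i1: "i1 \<in> {1..k}" and i2: "i2 \<in> {1..k}" and l: "i1 < i2" for i1 i2
  proof -
    have "jj i1 < t (i1 - 1) + n" using jj[rule_format, OF i1] by linarith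
    also have "\<dots> \<le> t i1" using tn[OF i1] .
    also have "\<dots> \<le> t (i2 - 1)" using t_mono[OF tlt, of i1 "i2 - 1"] l i2 by auto
    also have "\<dots> \<le> jj i2" using jj[rule_format, OF i2] by linarith
    finally show ?thesis .
  qed
  have inj: "inj_on jj {1..k}"
  proof (rule inj_onI)
    fix a b assume a: "a \<in> {1..k}" and b: "b \<in> {1..k}" and e: "jj a = jj b"
    show "a = b"
    proof (rule ccontr)
      assume "a \<noteq> b"
      then have "a < b \<or> b < a" by arith
      then show False using lt[OF a b] lt[OF b a] e by auto
    qed
  qed
  have img: "jj ` {1..k} \<subseteq> {j. j < t k \<and> z (0 + j) = z (0 + j + 1)}"
  proof
    fix j assume "j \<in> jj ` {1..k}"
    then obtain i where i: "i \<in> {1..k}" and j: "j = jj i" by blast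
    have "jj i < t (i - 1) + n" using jj[rule_format, OF i] by linarith
    also have "\<dots> \<le> t i" using tn[OF i] .
    also have "\<dots> \<le> t k" using t_mono[OF tlt, of i k] i by auto
    finally have "jj i < t k" .
    then have "jj i < t k \<and> z (jj i) = z (Suc (jj i))" using jj[rule_format, OF i] by simp
    then show "j \<in> {j. j < t k \<and> z (0 + j) = z (0 + j + 1)}" using j by simp
  qed
  have "card {1..k} \<le> card {j. j < t k \<and> z (0 + j) = z (0 + j + 1)}"
    by (rule card_inj_on_le[OF inj img]) simp
  then have ck: "k \<le> card {j. j < t k \<and> z (0 + j) = z (0 + j + 1)}" by simp
  have tk1: "t k \<ge> 1"
  proof -
    have "k \<in> {1..k}" using k1 by simp
    then have "t (k - 1) < t k" using tlt by blast
    then show ?thesis by simp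
  qed
  have tkb: "t k \<le> 2 * n * k" using t_bound[OF t2 t0, of k] by simp
  have "real k \<le> 100 + ln (real (t k))"
    using XF_cnt[OF zX tk1, of 0] ck by linarith
  also have "ln (real (t k)) \<le> ln (real (2 * n * k))"
  proof -
    have le: "real (t k) \<le> real (2 * n * k)" using tkb by (simp only: of_nat_le_iff)
    have p1: "real (t k) > 0" using tk1 by simp
    have p2: "real (2 * n * k) > 0" using n2 k1 by simp
    show ?thesis using ln_le_cancel_iff[OF p1 p2] le by blast
  qed
  also have "ln (real (2 * n * k)) = ln (2 * real n) + ln (real k)"
    using n2 k1 by (simp add: ln_mult)
  finally have A: "real k \<le> 100 + ln (2 * real n) + ln (real k)" by simp
  have "ln (2 * real n) < 2 * real n" using n2 by (intro ln_less_self) simp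
  moreover have "ln (real k) < real k / 2" using k1 by (intro ln_half) simp
  ultimately have "real k < 200 + 4 * real n" using A by linarith
  then show False unfolding k_def by simp
qed

theorem proposition6p1:
  shows "GF \<subseteq> language XF \<and> W_specification GF (language XF) \<and>
         edit_approachable (language XF) GF \<and>
         \<not> approx_product_property XF shift seq_metric"
  using GF_lang Wspec edit_approach not_app by blast


end
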